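(* If $P$ is a D-product of length $\ell$ over a finite alphabet $A$, then $h({\downarrow}P)\leq\ell+1$ and $h({\downarrow}_<P)\leq\ell+1$.
   Context: A D-product is a regular expression $E_1E_2\cdots E_\ell$ where each $E_i$ is either $B^*$ for some subalphabet $B\subseteq A$ or a single letter $a\in A$; $\ell$ is its length, and $P$ also denotes the language of the expression. $u\sqsubseteq v$ (subword) means $u=a_1\cdots a_n$ with letters $a_i$ and $v=v_0a_1v_1\cdots a_nv_n$; $u\sqsubset v$ means $u\sqsubseteq v$, $u\ne v$. ${\downarrow}L=\{v~|~\exists u\in L: v\sqsubseteq u\}$, ${\downarrow}_<L=\{v~|~\exists u\in L: v\sqsubset u\}$. $u\sim_n v$ iff $u,v$ have the same subwords of length at most $n$; $L$ is $n$-PT if it is a union of $\sim_n$-classes, and $h(L)$ is the least such $n$. *)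

theory Defs
  imports Main "HOL-Library.Sublist"
begin

text \<open>Words over the alphabet are lists of elements of a type; the finite alphabet A is
  the universe of a type of class finite. Subwords are (scattered) subsequences.\<close>

datatype 'a dfactor = StarF "'a set" | LetterF 'a

type_synonym 'a dproduct = "'a dfactor list"

fun factor_lang :: "'a dfactor \<Rightarrow> 'a list set" where
  "factor_lang (StarF B) = {w. set w \<subseteq> B}"
| "factor_lang (LetterF a) = {[a]}"

fun dlang :: "'a dproduct \<Rightarrow> 'a list set" where
  "dlang [] = {[]}"
| "dlang (E # P) = {u @ v | u v. u \<in> factor_lang E \<and> v \<in> dlang P}"

definition down :: "'a list set \<Rightarrow> 'a list set" where
  "down L = {v. \<exists>u\<in>L. subseq v u}"

definition sdown :: "'a list set \<Rightarrow> 'a list set" where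
  "sdown L = {v. \<exists>u\<in>L. strict_subseq v u}"

definition simeq :: "nat \<Rightarrow> 'a list \<Rightarrow> 'a list \<Rightarrow> bool" where
  "simeq n u v \<longleftrightarrow> (\<forall>w. length w \<le> n \<longrightarrow> (subseq w u \<longleftrightarrow> subseq w v))"

text \<open>L is n-PT iff it is a union of \<sim>_n classes, i.e. saturated by \<sim>_n.\<close>
definition nPT :: "nat \<Rightarrow> 'a list set \<Rightarrow> bool" where
  "nPT n L \<longleftrightarrow> (\<forall>u v. simeq n u v \<longrightarrow> (u \<in> L \<longleftrightarrow> v \<in> L))"

definition hPT :: "'a list set \<Rightarrow> nat" where
  "hPT L = (LEAST n. nPT n L)"

end

theory Submission
  imports Defs
begin

abbreviation LL :: "'a dproduct \<Rightarrow> 'a list set" where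
  "LL P \<equiv> down (dlang P)"

lemma dlang_ne: "\<exists>u. u \<in> dlang P"
proof (induction P)
  case Nil then show ?case by simp
next
  case (Cons E Q)
  then obtain v where v: "v \<in> dlang Q" by blast
  show ?case
  proof (cases E)
    case (StarF B)
    have "v = [] @ v \<and> [] \<in> factor_lang E \<and> v \<in> dlang Q" using v StarF by simp
    then show ?thesis by (auto simp del: append_Nil)
  next
    case (LetterF a)
    have "a # v = [a] @ v \<and> [a] \<in> factor_lang E \<and> v \<in> dlang Q" using v LetterF by simp
    then show ?thesis by (auto simp del: append_Cons append_Nil)
  qed
qed

lemma Nil_LL: "[] \<in> LL P"
  using dlang_ne[of P] unfolding down_def by auto

lemma LL_down: "subseq w v \<Longrightarrow> v \<in> down X \<Longrightarrow> w \<in> down X"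
  unfolding down_def using subseq_order.trans by blast

lemma subseq_set: "subseq xs ys \<Longrightarrow> set xs \<subseteq> set ys"
  by (induct rule: list_emb.induct) auto

lemma LL_Nil: "LL [] = {[]}"
  unfolding down_def by auto

lemma LL_star: "LL (StarF B # Q) = {x @ v | x v. set x \<subseteq> B \<and> v \<in> LL Q}"
proof
  show "LL (StarF B # Q) \<subseteq> {x @ v | x v. set x \<subseteq> B \<and> v \<in> LL Q}"
  proof
    fix v assume "v \<in> LL (StarF B # Q)"
    then obtain u w where uw: "set u \<subseteq> B" "w \<in> dlang Q" "subseq v (u @ w)"
      unfolding down_def by auto
    from uw(3) obtain v1 v2 where "v = v1 @ v2" "subseq v1 u" "subseq v2 w"
      by (rule subseq_appendE)
    then show "v \<in> {x @ v | x v. set x \<subseteq> B \<and> v \<in> LL Q}"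
      using uw subseq_set[of v1 u] unfolding down_def by blast
  qed
next
  show "{x @ v | x v. set x \<subseteq> B \<and> v \<in> LL Q} \<subseteq> LL (StarF B # Q)"
  proof
    fix z assume "z \<in> {x @ v | x v. set x \<subseteq> B \<and> v \<in> LL Q}"
    then obtain x v w where "z = x @ v" "set x \<subseteq> B" "w \<in> dlang Q" "subseq v w"
      unfolding down_def by auto
    then show "z \<in> LL (StarF B # Q)"
      unfolding down_def by (auto intro!: bexI[of _ "x @ w"] list_emb_append_mono)
  qed
qed

lemma LL_letter: "LL (LetterF a # Q) = LL Q \<union> {a # v | v. v \<in> LL Q}"
proof
  show "LL (LetterF a # Q) \<subseteq> LL Q \<union> {a # v | v. v \<in> LL Q}"
  proof
    fix v assume "v \<in> LL (LetterF a # Q)"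
    then obtain w where w: "w \<in> dlang Q" "subseq v (a # w)"
      unfolding down_def by auto
    show "v \<in> LL Q \<union> {a # v | v. v \<in> LL Q}"
    proof (cases v)
      case Nil then show ?thesis using Nil_LL by auto
    next
      case (Cons x v')
      then show ?thesis using w unfolding down_def by (auto split: if_splits)
    qed
  qed
next
  show "LL Q \<union> {a # v | v. v \<in> LL Q} \<subseteq> LL (LetterF a # Q)"
  proof
    fix z assume "z \<in> LL Q \<union> {a # v | v. v \<in> LL Q}"
    then obtain w where "w \<in> dlang Q" "subseq z w \<or> (\<exists>v. z = a # v \<and> subseq v w)"
      unfolding down_def by auto
    then show "z \<in> LL (LetterF a # Q)"
      unfolding down_def by (auto intro!: bexI[of _ "[a] @ w"])
  qed
qed

declare dlang.simps[simp del]

lemma star_in: "c \<in> B \<Longrightarrow> (c # z \<in> LL (StarF B # Q)) = (z \<in> LL (StarF B # Q))"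
proof
  assume c: "c \<in> B" and "c # z \<in> LL (StarF B # Q)"
  then obtain x v where xv: "c # z = x @ v" "set x \<subseteq> B" "v \<in> LL Q"
    unfolding LL_star by blast
  show "z \<in> LL (StarF B # Q)"
  proof (cases x)
    case Nil
    then have "z \<in> LL Q" using xv LL_down[of z "c # z"] by auto
    then have "z = [] @ z \<and> set ([]::'a list) \<subseteq> B \<and> z \<in> LL Q" by simp
    then show ?thesis unfolding LL_star by blast
  next
    case (Cons y x')
    then show ?thesis using xv unfolding LL_star by auto
  qed
next
  assume c: "c \<in> B" and "z \<in> LL (StarF B # Q)"
  then obtain x v where xv: "z = x @ v" "set x \<subseteq> B" "v \<in> LL Q"
    unfolding LL_star by blast
  then have "c # z = (c # x) @ v \<and> set (c # x) \<subseteq> B \<and> v \<in> LL Q" using c by simp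
  then show "c # z \<in> LL (StarF B # Q)" unfolding LL_star by blast
qed

lemma star_notin: "c \<notin> B \<Longrightarrow> (c # z \<in> LL (StarF B # Q)) = (c # z \<in> LL Q)"
proof
  assume c: "c \<notin> B" and "c # z \<in> LL (StarF B # Q)"
  then obtain x v where xv: "c # z = x @ v" "set x \<subseteq> B" "v \<in> LL Q"
    unfolding LL_star by blast
  then show "c # z \<in> LL Q" using c by (cases x) auto
next
  assume "c # z \<in> LL Q"
  then have "c # z = [] @ (c # z) \<and> set ([]::'a list) \<subseteq> B \<and> c # z \<in> LL Q" by simp
  then show "c # z \<in> LL (StarF B # Q)" unfolding LL_star by blast
qed

lemma LLl: "(z \<in> LL (LetterF a # Q)) = (z \<in> LL Q \<or> (\<exists>v. z = a # v \<and> v \<in> LL Q))"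
  by (subst LL_letter) blast

lemma H: "c # y \<notin> LL P \<Longrightarrow> \<exists>w. subseq w y \<and> length w \<le> length P \<and> c # w \<notin> LL P"
proof (induction P arbitrary: c y)
  case Nil
  show ?case by (intro exI[of _ "[]"]) (simp add: down_def dlang.simps)
next
  case (Cons E Q)
  note IHQ = Cons.IH
  note pr = Cons.prems
  show ?case
  proof (cases E)
    case (LetterF a)
    show ?thesis
    proof (cases "c = a")
      case False
      then have "c # y \<notin> LL Q" using pr unfolding LetterF LLl by blast
      then obtain w where w: "subseq w y" "length w \<le> length Q" "c # w \<notin> LL Q"
        using IHQ by blast
      then have "c # w \<notin> LL (E # Q)" using False unfolding LetterF LLl by blast
      then show ?thesis using w by auto
    next
      case True
      then have ny: "y \<notin> LL Q" using pr unfolding LetterF LLl by blast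
      then obtain d y' where y: "y = d # y'" using Nil_LL by (cases y) auto
      then obtain w0 where w0: "subseq w0 y'" "length w0 \<le> length Q" "d # w0 \<notin> LL Q"
        using IHQ ny by blast
      have "subseq (d # w0) (a # d # w0)" by (rule list_emb_Cons) simp
      then have "a # d # w0 \<notin> LL Q" using w0(3) LL_down by blast
      then have "c # d # w0 \<notin> LL (E # Q)" using w0(3) True unfolding LetterF LLl by blast
      moreover have "subseq (d # w0) y" using y w0(1) by simp
      ultimately show ?thesis using w0(2) by (intro exI[of _ "d # w0"]) simp
    qed
  next
    case (StarF B)
    have S: "y \<notin> LL (StarF B # Q) \<Longrightarrow>
      \<exists>w. subseq w y \<and> length w \<le> length Q + 1 \<and> w \<notin> LL (StarF B # Q)" for y
    proof (induction y)
      case Nil then show ?case using Nil_LL by blast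
    next
      case (Cons d y')
      show ?case
      proof (cases "d \<in> B")
        case True
        then have "y' \<notin> LL (StarF B # Q)" using Cons.prems by (simp add: star_in)
        then obtain w where "subseq w y'" "length w \<le> length Q + 1" "w \<notin> LL (StarF B # Q)"
          using Cons.IH by blast
        then show ?thesis by auto
      next
        case False
        then have "d # y' \<notin> LL Q" using Cons.prems by (simp add: star_notin)
        then obtain w0 where w0: "subseq w0 y'" "length w0 \<le> length Q" "d # w0 \<notin> LL Q"
          using IHQ by blast
        then have "d # w0 \<notin> LL (StarF B # Q)" using False by (simp add: star_notin)
        moreover have "subseq (d # w0) (d # y')" using w0(1) by simp
        ultimately show ?thesis using w0(2) by (intro exI[of _ "d # w0"]) simp
      qed
    qed
    show ?thesis
    proof (cases "c \<in> B")
      case True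
      then have "y \<notin> LL (StarF B # Q)" using pr unfolding StarF by (simp add: star_in)
      then obtain w where w: "subseq w y" "length w \<le> length Q + 1" "w \<notin> LL (StarF B # Q)"
        using S by blast
      then have "c # w \<notin> LL (E # Q)" unfolding StarF using True by (simp add: star_in)
      then show ?thesis using w by auto
    next
      case False
      then have "c # y \<notin> LL Q" using pr unfolding StarF by (simp add: star_notin)
      then obtain w where w: "subseq w y" "length w \<le> length Q" "c # w \<notin> LL Q"
        using IHQ by blast
      then have "c # w \<notin> LL (E # Q)" unfolding StarF using False by (simp add: star_notin)
      then show ?thesis using w by auto
    qed
  qed
qed

lemma simeqD: "simeq n u v \<Longrightarrow> length w \<le> n \<Longrightarrow> subseq w u = subseq w v"
  unfolding simeq_def by blast

lemma simeq_sym: "simeq n u v \<Longrightarrow> simeq n v u"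
  unfolding simeq_def by metis

lemma nPT_LL_aux: "simeq (length P + 1) u v \<Longrightarrow> u \<in> LL P \<Longrightarrow> v \<in> LL P"
proof (rule ccontr)
  assume s: "simeq (length P + 1) u v" and u: "u \<in> LL P" and v: "v \<notin> LL P"
  have "v \<noteq> []" using v Nil_LL by metis
  then obtain c y where cy: "v = c # y" by (cases v) auto
  with v have "c # y \<notin> LL P" by simp
  from H[OF this] obtain w where w: "subseq w y" "length w \<le> length P" "c # w \<notin> LL P"
    by blast
  have "subseq (c # w) v" using w(1) cy by simp
  moreover have "length (c # w) \<le> length P + 1" using w(2) by simp
  ultimately have "subseq (c # w) u" using simeqD[OF s, of "c # w"] by simp
  from LL_down[OF this u] w(3) show False by simp
qed

lemma nPT_LL: "nPT (length P + 1) (LL P)"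
  unfolding nPT_def
proof (intro allI impI)
  fix u v :: "'a list" assume s: "simeq (length P + 1) u v"
  show "(u \<in> LL P) = (v \<in> LL P)"
    using nPT_LL_aux[OF s] nPT_LL_aux[OF simeq_sym[OF s]] by blast
qed

lemma simeq_mono: "simeq n u v \<Longrightarrow> m \<le> n \<Longrightarrow> simeq m u v"
  unfolding simeq_def by auto

lemma nPT_mono: "nPT m X \<Longrightarrow> m \<le> n \<Longrightarrow> nPT n X"
  unfolding nPT_def
proof (intro allI impI)
  fix u v :: "'a list" assume a: "\<forall>u v. simeq m u v \<longrightarrow> (u \<in> X) = (v \<in> X)" and "m \<le> n" and s: "simeq n u v"
  then have "simeq m u v" using simeq_mono by blast
  then show "(u \<in> X) = (v \<in> X)" using a by blast
qed

lemma nPT_Union: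
  assumes "\<And>X. X \<in> F \<Longrightarrow> nPT n X" shows "nPT n (\<Union>F)"
  unfolding nPT_def
proof (intro allI impI)
  fix u v :: "'a list" assume s: "simeq n u v"
  have "\<And>X. X \<in> F \<Longrightarrow> (u \<in> X) = (v \<in> X)"
  proof -
    fix X assume "X \<in> F"
    then have "\<forall>u v. simeq n u v \<longrightarrow> (u \<in> X) = (v \<in> X)" using assms unfolding nPT_def by blast
    then show "(u \<in> X) = (v \<in> X)" using s by blast
  qed
  then show "(u \<in> \<Union>F) = (v \<in> \<Union>F)" by auto
qed

lemma sdown_sub: "sdown X \<subseteq> down X"
  unfolding sdown_def down_def strict_subseq_def by auto

lemma sdown_rep: "\<exists>S. (\<forall>P'\<in>S. length P' \<le> length P) \<and> sdown (dlang P) = (\<Union>P'\<in>S. LL P')"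
proof (induction P)
  case Nil
  have "sdown (dlang []) = {}" unfolding sdown_def by (auto simp: dlang.simps strict_subseq_def)
  then show ?case by (intro exI[of _ "{}"]) auto
next
  case (Cons E Q)
  then obtain S where S: "\<forall>P'\<in>S. length P' \<le> length Q" "sdown (dlang Q) = (\<Union>P'\<in>S. LL P')"
    by blast
  show ?case
  proof (cases E)
    case (StarF B)
    show ?thesis
    proof (cases "B = {}")
      case True
      then have "dlang (E # Q) = dlang Q" using StarF by (auto simp: dlang.simps)
      then show ?thesis using S by (intro exI[of _ S]) auto
    next
      case False
      then obtain b where b: "b \<in> B" by blast
      have "sdown (dlang (E # Q)) = LL (E # Q)"
      proof
        show "sdown (dlang (E # Q)) \<subseteq> LL (E # Q)" by (rule sdown_sub)
        show "LL (E # Q) \<subseteq> sdown (dlang (E # Q))"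
        proof
          fix v assume "v \<in> LL (E # Q)"
          then obtain u where u: "u \<in> dlang (E # Q)" "subseq v u" unfolding down_def by auto
          then obtain x w where xw: "u = x @ w" "set x \<subseteq> B" "w \<in> dlang Q" using StarF by (auto simp: dlang.simps)
          have "b # u = (b # x) @ w \<and> (b # x) \<in> factor_lang E \<and> w \<in> dlang Q" using xw b StarF by simp
          then have "b # u \<in> dlang (E # Q)" by (auto simp: dlang.simps simp del: append_Cons)
          moreover have "strict_subseq v (b # u)"
            using u(2) list_emb_length[OF u(2)] by (auto simp: strict_subseq_def)
          ultimately show "v \<in> sdown (dlang (E # Q))" unfolding sdown_def by blast
        qed
      qed
      then show ?thesis by (intro exI[of _ "{E # Q}"]) auto
    qed
  next
    case (LetterF a)
    have sd: "sdown (dlang (E # Q)) = LL Q \<union> {a # v | v. v \<in> sdown (dlang Q)}"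
    proof
      show "sdown (dlang (E # Q)) \<subseteq> LL Q \<union> {a # v | v. v \<in> sdown (dlang Q)}"
      proof
        fix v assume "v \<in> sdown (dlang (E # Q))"
        then obtain w where w: "w \<in> dlang Q" "strict_subseq v (a # w)"
          using LetterF unfolding sdown_def by (auto simp: dlang.simps)
        show "v \<in> LL Q \<union> {a # v | v. v \<in> sdown (dlang Q)}"
        proof (cases v)
          case Nil then show ?thesis using Nil_LL by auto
        next
          case (Cons x v')
          have sv: "subseq (x # v') (a # w)" "x # v' \<noteq> a # w"
            using w(2) Cons unfolding strict_subseq_def by auto
          show ?thesis
          proof (cases "x = a")
            case True
            then have "subseq v' w" "v' \<noteq> w" using sv by auto
            then have "v' \<in> sdown (dlang Q)" using w(1) unfolding sdown_def strict_subseq_def by blast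
            then show ?thesis using Cons True by blast
          next
            case False
            then have "subseq (x # v') w" using sv by simp
            then have "v \<in> LL Q" using w(1) Cons unfolding down_def by blast
            then show ?thesis by blast
          qed
        qed
      qed
    next
      show "LL Q \<union> {a # v | v. v \<in> sdown (dlang Q)} \<subseteq> sdown (dlang (E # Q))"
      proof
        fix z assume "z \<in> LL Q \<union> {a # v | v. v \<in> sdown (dlang Q)}"
        then obtain w where w: "w \<in> dlang Q"
          "subseq z w \<or> (\<exists>v. z = a # v \<and> strict_subseq v w)"
          unfolding down_def sdown_def by auto
        have "a # w = [a] @ w \<and> [a] \<in> factor_lang E \<and> w \<in> dlang Q" using w LetterF by simp
        then have aw: "a # w \<in> dlang (E # Q)" unfolding dlang.simps by blast
        have "strict_subseq z (a # w)"
          using w(2) list_emb_length[of "(=)" z w] unfolding strict_subseq_def by auto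
        then show "z \<in> sdown (dlang (E # Q))" using aw unfolding sdown_def by blast
      qed
    qed
    have sub: "LL P' \<subseteq> LL Q" if "P' \<in> S" for P'
      using S(2) sdown_sub[of "dlang Q"] that by blast
    have "(\<Union>P'\<in>({Q} \<union> (\<lambda>Q'. LetterF a # Q') ` S). LL P') = LL Q \<union> (\<Union>Q'\<in>S. LL (LetterF a # Q'))"
      by simp
    also have "\<dots> = LL Q \<union> {a # v | v. v \<in> (\<Union>P'\<in>S. LL P')}"
    proof (rule set_eqI)
      fix z
      show "(z \<in> LL Q \<union> (\<Union>Q'\<in>S. LL (LetterF a # Q'))) = (z \<in> LL Q \<union> {a # v | v. v \<in> (\<Union>P'\<in>S. LL P')})"
      proof -
        have e: "(z \<in> (\<Union>Q'\<in>S. LL (LetterF a # Q'))) = (\<exists>Q'\<in>S. z \<in> LL Q' \<or> (\<exists>v. z = a # v \<and> v \<in> LL Q'))"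
          by (simp add: LLl)
        show ?thesis unfolding Un_iff e using sub by blast
      qed
    qed
    finally have "sdown (dlang (E # Q)) = (\<Union>P'\<in>({Q} \<union> (\<lambda>Q'. LetterF a # Q') ` S). LL P')"
      unfolding sd S(2) by simp
    then show ?thesis using S(1) by (intro exI[of _ "{Q} \<union> (\<lambda>Q'. LetterF a # Q') ` S"]) auto
  qed
qed

lemma nPT_sdown: "nPT (length P + 1) (sdown (dlang P))"
proof -
  obtain S where S0: "(\<forall>P'\<in>S. length P' \<le> length P) \<and> sdown (dlang P) = (\<Union>P'\<in>S. LL P')"
    using sdown_rep[of P] by (rule exE)
  note S = conjunct1[OF S0] conjunct2[OF S0]
  show ?thesis unfolding S(2)
  proof (rule nPT_Union)
    fix X assume "X \<in> LL ` S"
    then obtain P' where P': "P' \<in> S" "X = LL P'" by blast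
    have "length P' + 1 \<le> length P + 1" using S(1) P'(1) by simp
    from nPT_mono[OF nPT_LL[of P'] this] show "nPT (length P + 1) X" using P'(2) by simp
  qed
qed

theorem proposition12:
  fixes P :: "('a::finite) dproduct"
  shows "hPT (down (dlang P)) \<le> length P + 1 \<and> hPT (sdown (dlang P)) \<le> length P + 1"
  unfolding hPT_def
proof (rule conjI)
  show "(LEAST n. nPT n (down (dlang P))) \<le> length P + 1" by (rule Least_le) (rule nPT_LL)
  show "(LEAST n. nPT n (sdown (dlang P))) \<le> length P + 1" by (rule Least_le) (rule nPT_sdown)
qed

end
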